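(* Consider the single-asset setting of the context with $\alpha\Sigma>0$, and regard all quantities as functions of $\theta\ge0$ with the other parameters fixed. (i) For $t\in[0,T)$, $C(t;\theta)$ is strictly decreasing in $\theta$. (ii) For $x>0$ and $t\in[0,T)$, $\xi^*(t,x;\theta)$ is strictly decreasing in $\theta$. (iii) For $x>0$ and $t\in(0,T)$, $\tilde X(t;\theta)$ is strictly increasing in $\theta$. (iv) For $x>0$ and $t\in(0,T)$, $\mathbb{E}[X^*(t;\theta)]$ is strictly decreasing in $\theta$. (v) The risk costs $\alpha\Sigma\cdot\mathbb{E}\big[\int_0^TX^*(t;\theta)^2dt\big]$ are strictly decreasing in $\theta$. (vi) The impact costs $\Lambda\cdot\mathbb{E}\big[\int_0^T\xi^*(t,X^*(t;\theta);\theta)^2dt\big]$ are strictly decreasing in $\theta$.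
   Context: Single-asset setting: $T>0$, price impact $\Lambda>0$, variance $\Sigma\ge0$, risk aversion $\alpha\ge0$ (scalars), dark pool execution modeled by a Poisson process $\pi$ with intensity $\theta\ge0$. Let $\tilde\theta:=\sqrt{\theta^2+4\alpha\Sigma/\Lambda}$ and for $t\in[0,T)$ $$C(t;\theta)=\frac{\Lambda\tilde\theta}{2}\coth\Big(\frac{\tilde\theta}{2}(T-t)\Big)-\frac{\Lambda\theta}{2}\ \text{ if }\theta>0\text{ or }\alpha\Sigma>0,\qquad C(t;\theta)=\frac{\Lambda}{T-t}\ \text{ otherwise};$$ $C(t;\theta)x^2$ is the minimal expected cost of liquidating position $x$ over $[t,T)$. The optimal strategy trades at the exchange at rate $\xi^*(t,x;\theta)=C(t;\theta)x/\Lambda$ and (for $\theta>0$) places the whole remaining position in the dark pool. Given initial position $x$ at time $0$, $\tilde X(t;\theta):=x\exp\big(-\int_0^tC(s;\theta)/\Lambda\,ds\big)$ is the trajectory before dark pool execution, and the optimally controlled position is $X^*(t;\theta)=\tilde X(t;\theta)$ for $t<\tau$ and $X^*(t;\theta)=0$ for $t\ge\tau$, where $\tau$ is the first jump time of $\pi$ (for $\theta=0$, $\tau=\infty$). *)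

theory Defs
  imports "HOL-Probability.Probability"
begin

text \<open>Single-asset optimal liquidation with a dark pool (Poisson execution with intensity theta).
  Parameters: horizon T, price impact Lam, variance Sig, risk aversion alpha.\<close>

definition theta_tilde :: "real \<Rightarrow> real \<Rightarrow> real \<Rightarrow> real \<Rightarrow> real" where
  "theta_tilde Lam Sig alpha theta = sqrt (theta\<^sup>2 + 4 * alpha * Sig / Lam)"

definition coth :: "real \<Rightarrow> real" where
  "coth y = cosh y / sinh y"

definition Cfun :: "real \<Rightarrow> real \<Rightarrow> real \<Rightarrow> real \<Rightarrow> real \<Rightarrow> real \<Rightarrow> real" where
  "Cfun T Lam Sig alpha theta t =
     (if theta > 0 \<or> alpha * Sig > 0
      then Lam * theta_tilde Lam Sig alpha theta / 2
             * coth (theta_tilde Lam Sig alpha theta / 2 * (T - t)) - Lam * theta / 2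
      else Lam / (T - t))"

definition xi_star :: "real \<Rightarrow> real \<Rightarrow> real \<Rightarrow> real \<Rightarrow> real \<Rightarrow> real \<Rightarrow> real \<Rightarrow> real" where
  "xi_star T Lam Sig alpha theta t x = Cfun T Lam Sig alpha theta t * x / Lam"

definition X_tilde :: "real \<Rightarrow> real \<Rightarrow> real \<Rightarrow> real \<Rightarrow> real \<Rightarrow> real \<Rightarrow> real \<Rightarrow> real" where
  "X_tilde T Lam Sig alpha x theta t =
     x * exp (- integral {0..t} (\<lambda>s. Cfun T Lam Sig alpha theta s / Lam))"

text \<open>optimally controlled position, given the first jump time tau of the Poisson process
  (tau = infinity is allowed, e.g. theta = 0)\<close>
definition X_star :: "real \<Rightarrow> real \<Rightarrow> real \<Rightarrow> real \<Rightarrow> real \<Rightarrow> real \<Rightarrow> ereal \<Rightarrow> real \<Rightarrow> real" where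
  "X_star T Lam Sig alpha x theta tau t =
     (if ereal t < tau then X_tilde T Lam Sig alpha x theta t else 0)"

text \<open>tau is (distributed as) the first jump time of a Poisson process with intensity theta
  on the probability space M: P(tau > t) = exp(- theta t) for all t \<ge> 0
  (for theta = 0 this means tau = infinity almost surely).\<close>
definition first_jump_time :: "'a measure \<Rightarrow> ('a \<Rightarrow> ereal) \<Rightarrow> real \<Rightarrow> bool" where
  "first_jump_time M tau theta \<longleftrightarrow>
     prob_space M \<and> tau \<in> borel_measurable M \<and>
     (\<forall>t\<ge>0. measure M {\<omega> \<in> space M. ereal t < tau \<omega>} = exp (- theta * t))"

definition expected_position :: "real \<Rightarrow> real \<Rightarrow> real \<Rightarrow> real \<Rightarrow> real \<Rightarrow> real \<Rightarrow> 'a measure \<Rightarrow> ('a \<Rightarrow> ereal) \<Rightarrow> real \<Rightarrow> real" where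
  "expected_position T Lam Sig alpha x theta M tau t =
     (\<integral>\<omega>. X_star T Lam Sig alpha x theta (tau \<omega>) t \<partial>M)"

definition risk_costs :: "real \<Rightarrow> real \<Rightarrow> real \<Rightarrow> real \<Rightarrow> real \<Rightarrow> real \<Rightarrow> 'a measure \<Rightarrow> ('a \<Rightarrow> ereal) \<Rightarrow> real" where
  "risk_costs T Lam Sig alpha x theta M tau =
     alpha * Sig * (\<integral>\<omega>. (LBINT t:{0..<T}. (X_star T Lam Sig alpha x theta (tau \<omega>) t)\<^sup>2) \<partial>M)"

definition impact_costs :: "real \<Rightarrow> real \<Rightarrow> real \<Rightarrow> real \<Rightarrow> real \<Rightarrow> real \<Rightarrow> 'a measure \<Rightarrow> ('a \<Rightarrow> ereal) \<Rightarrow> real" where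
  "impact_costs T Lam Sig alpha x theta M tau =
     Lam * (\<integral>\<omega>. (LBINT t:{0..<T}.
        (xi_star T Lam Sig alpha theta t (X_star T Lam Sig alpha x theta (tau \<omega>) t))\<^sup>2) \<partial>M)"

end

theory Submission imports Defs begin

lemma sinh_cosh_gt: fixes y :: real assumes "y > 0" shows "y < sinh y * cosh y"
proof -
  have s: "y \<le> sinh y" using real_le_x_sinh[of y] assms by (simp add: sinh_field_def exp_minus)
  have c: "cosh y > 1" using cosh_real_ge_1[of y] cosh_real_one_iff[of y] assms by linarith
  have "y < y * cosh y" using c assms by simp
  also have "\<dots> \<le> sinh y * cosh y" using s by (simp add: mult_right_mono)
  finally show ?thesis .
qed

lemma ucoth_strict_mono:
  fixes u1 u2 c :: real assumes "0 < u1" "u1 < u2" "c > 0"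
  shows "u1 * coth (u1 * c) < u2 * coth (u2 * c)"
proof -
  define g where "g u = u * cosh (u * c) / sinh (u * c)" for u
  have "g u1 < g u2"
  proof (rule DERIV_pos_imp_increasing[OF assms(2)])
    fix u assume u: "u1 \<le> u" "u \<le> u2"
    then have up: "u > 0" using assms by linarith
    have sp: "sinh (u*c) > 0" using up assms by simp
    have eq: "\<And>s k. s \<noteq> 0 \<Longrightarrow> ((k + s * c * u) * s - u * k * (k * c))/(s * s) = k/s + u * (s * c * s - k * (k * c))/(s * s)"
      by (simp add: field_simps)
    have eq2: "\<And>s k. s \<noteq> 0 \<Longrightarrow> k * k = s * s + 1 \<Longrightarrow> k / s + u * ((s * c) * s - k * (k * c)) / (s)^2 = (s * k - u * c) / (s)^2"
    proof -
      fix s k :: real assume h: "s \<noteq> 0" "k * k = s * s + 1"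
      have "k * (k * (c * u)) = (s * s + 1) * (c * u)" using h(2) by (metis mult.assoc)
      then show "k / s + u * ((s * c) * s - k * (k * c)) / (s)^2 = (s * k - u * c) / (s)^2"
        using h(1) by (simp add: field_simps power2_eq_square)
    qed
    have "DERIV g u :> (cosh (u*c) / sinh (u*c) + u * ((sinh (u*c) * c) * sinh (u*c) - cosh (u*c) * (cosh (u*c) * c)) / (sinh (u*c))^2)"
      unfolding g_def
      using up assms(3) apply (auto intro!: derivative_eq_intros simp: power2_eq_square)
      apply (rule eq)
      using sp by simp
    moreover have "(cosh (u*c) / sinh (u*c) + u * ((sinh (u*c) * c) * sinh (u*c) - cosh (u*c) * (cosh (u*c) * c)) / (sinh (u*c))^2)
       = (sinh (u*c) * cosh (u*c) - u*c) / (sinh (u*c))^2"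
    proof (rule eq2)
      show "sinh (u * c) \<noteq> 0" using sp by (metis less_irrefl)
      show "cosh (u * c) * cosh (u * c) = sinh (u * c) * sinh (u * c) + 1"
        using cosh_square_eq[of "u*c"] by (simp add: power2_eq_square)
    qed
    moreover have "(sinh (u*c) * cosh (u*c) - u*c) / (sinh (u*c))^2 > 0"
      using sinh_cosh_gt[of "u*c"] up assms sp by simp
    ultimately show "\<exists>y. DERIV g u :> y \<and> 0 < y" by auto
  qed
  then show ?thesis by (simp add: g_def coth_def)
qed

lemma coth_exp: fixes v :: real assumes "v > 0" shows "coth v = 1 + 2 / (exp (2 * v) - 1)"
proof -
  have e: "exp (2 * v) = exp v * exp v" by (simp add: exp_add[symmetric])
  have "exp v > 1" using assms by simp
  then have "exp v * exp v > 1" by (metis less_1_mult)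
  then show ?thesis unfolding coth_def sinh_field_def cosh_field_def e exp_minus
    using \<open>exp v > 1\<close> by (simp add: field_simps)
qed

lemma q_mono: fixes w1 w2 :: real assumes "0 < w1" "w1 \<le> w2"
  shows "w2 / (exp w2 - 1) \<le> w1 / (exp w1 - 1)"
proof -
  define d where "d = w2 - w1"
  have d: "d \<ge> 0" using assms d_def by simp
  have e2: "exp w2 = exp w1 * exp d" by (simp add: d_def exp_add[symmetric])
  have ed: "exp d \<ge> 1 + d" by (rule exp_ge_add_one_self)
  have k: "exp w1 * (1 - w1) \<le> 1"
  proof -
    have "1 - w1 \<le> exp (-w1)" using exp_ge_add_one_self[of "-w1"] by simp
    then have "exp w1 * (1 - w1) \<le> exp w1 * exp (-w1)" by (simp add: mult_left_mono)
    then show ?thesis by (simp add: exp_minus)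
  qed
  have p1: "exp w1 > 1" "exp w2 > 1" using assms by auto
  have "w2 * (exp w1 - 1) \<le> w1 * (exp w2 - 1)"
  proof -
    have "w1 * (exp w2 - 1) \<ge> w1 * (exp w1 * (1 + d) - 1)"
      using e2 ed assms by (simp add: mult_left_mono)
    moreover have "w1 * (exp w1 * (1 + d) - 1) - w2 * (exp w1 - 1) = d * (exp w1 * (w1 - 1) + 1)"
      by (simp add: d_def algebra_simps)
    moreover have "d * (exp w1 * (w1 - 1) + 1) \<ge> 0" using d k by (intro mult_nonneg_nonneg) (auto simp: algebra_simps)
    ultimately show ?thesis by linarith
  qed
  then show ?thesis using p1 by (simp add: field_simps)
qed


lemma LI:
  fixes f :: "real \<Rightarrow> real"
  assumes "continuous_on {0..T} f" "0 \<le> T"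
  shows "(LBINT t:{0..<T}. f t) = integral {0..T} f"
proof -
  have "(LBINT t:{0..<T}. f t) = (LBINT t:{0..T}. f t)"
    using interval_integral_Ico[of 0 T f] interval_integral_Icc[of 0 T f] assms by simp
  also have "\<dots> = integral {0..T} f"
    by (rule set_borel_integral_eq_integral(2)[OF borel_integrable_atLeastAtMost'[OF assms(1)]])
  finally show ?thesis .
qed

lemma swap:
  fixes M :: "'a measure" and \<tau> :: "'a \<Rightarrow> ereal" and F :: "real \<Rightarrow> real"
  assumes fj: "first_jump_time M \<tau> \<theta>" and F: "continuous_on UNIV F" and T: "T > 0"
  shows "(\<integral>\<omega>. (LBINT t:{0..<T}. (if ereal t < \<tau> \<omega> then F t else 0)) \<partial>M)
        = (LBINT t:{0..<T}. F t * exp (- \<theta> * t))"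
proof -
  interpret prob_space M using fj first_jump_time_def by auto
  have \<tau>m[measurable]: "\<tau> \<in> borel_measurable M" using fj first_jump_time_def by auto
  have Fm[measurable]: "F \<in> borel_measurable borel" by (rule borel_measurable_continuous_onI[OF F])
  have meas: "\<And>t. t \<ge> 0 \<Longrightarrow> measure M {\<omega> \<in> space M. ereal t < \<tau> \<omega>} = exp (- \<theta> * t)"
    using fj first_jump_time_def by auto
  interpret P: pair_sigma_finite M lborel by unfold_locales
  define g where "g = (\<lambda>\<omega> t. indicator {0..<T} t * (if ereal t < \<tau> \<omega> then F t else 0))"
  have gm: "(\<lambda>z. g (fst z) (snd z)) \<in> borel_measurable (M \<Otimes>\<^sub>M lborel)"
    unfolding g_def by measurable
  obtain B where B: "\<And>t. t \<in> {0..T} \<Longrightarrow> norm (F t) \<le> B"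
    using compact_imp_bounded[OF compact_continuous_image[OF continuous_on_subset[OF F] compact_Icc]]
    unfolding bounded_iff by (metis image_eqI subset_UNIV)
  have int: "integrable (M \<Otimes>\<^sub>M lborel) (case_prod g)"
  proof (rule integrableI_bounded_set[where A="space M \<times> {0..<T}" and B=B])
    show "space M \<times> {0..<T} \<in> sets (M \<Otimes>\<^sub>M lborel)" by measurable
    show "case_prod g \<in> borel_measurable (M \<Otimes>\<^sub>M lborel)" using gm by (simp add: case_prod_beta')
    show "emeasure (M \<Otimes>\<^sub>M lborel) (space M \<times> {0..<T}) < \<infinity>"
      using T by (subst lborel.emeasure_pair_measure_Times) (auto simp: emeasure_space_1)
    show "AE x in M \<Otimes>\<^sub>M lborel. x \<in> space M \<times> {0..<T} \<longrightarrow> norm (case_prod g x) \<le> B"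
    proof (intro AE_I2 impI)
      fix x assume x: "x \<in> space M \<times> {0..<T}"
      have "0 \<le> B" using B[of 0] T by (metis abs_ge_zero atLeastAtMost_iff order.trans less_imp_le order_refl real_norm_def)
      then show "norm (case_prod g x) \<le> B" using B x by (auto simp: g_def indicator_def)
    qed
    show "AE x in M \<Otimes>\<^sub>M lborel. x \<notin> space M \<times> {0..<T} \<longrightarrow> case_prod g x = 0"
      by (auto simp: g_def indicator_def space_pair_measure)
  qed
  have "(\<integral>\<omega>. (LBINT t:{0..<T}. (if ereal t < \<tau> \<omega> then F t else 0)) \<partial>M)
      = (\<integral>\<omega>. (\<integral>t. g \<omega> t \<partial>lborel) \<partial>M)"
    by (simp add: set_lebesgue_integral_def g_def)
  also have "\<dots> = (\<integral>t. (\<integral>\<omega>. g \<omega> t \<partial>M) \<partial>lborel)"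
    using P.Fubini_integral[OF int] by simp
  also have "\<dots> = (\<integral>t. indicator {0..<T} t * (F t * exp (- \<theta> * t)) \<partial>lborel)"
  proof (rule Bochner_Integration.integral_cong[OF refl])
    fix t :: real
    show "(\<integral>\<omega>. g \<omega> t \<partial>M) = indicator {0..<T} t * (F t * exp (- \<theta> * t))"
    proof (cases "t \<in> {0..<T}")
      case True
      have "(\<integral>\<omega>. g \<omega> t \<partial>M) = (\<integral>\<omega>. F t * indicator {\<omega> \<in> space M. ereal t < \<tau> \<omega>} \<omega> \<partial>M)"
        by (rule Bochner_Integration.integral_cong[OF refl]) (use True in \<open>auto simp: g_def indicator_def\<close>)
      also have "\<dots> = F t * measure M {\<omega> \<in> space M. ereal t < \<tau> \<omega>}"
        by simp
      also have "\<dots> = F t * exp (- \<theta> * t)" using True meas by simp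
      finally show ?thesis using True by simp
    next
      case False then show ?thesis by (simp add: g_def)
    qed
  qed
  also have "\<dots> = (LBINT t:{0..<T}. F t * exp (- \<theta> * t))"
    by (simp add: set_lebesgue_integral_def)
  finally show ?thesis .
qed


locale dp =
  fixes T Lam Sig alpha :: real
  assumes T: "T > 0" and Lam: "Lam > 0" and aS: "alpha * Sig > 0"
begin

definition "a = 4 * alpha * Sig / Lam"
definition "u \<theta> = theta_tilde Lam Sig alpha \<theta>"
definition "K \<theta> t = u \<theta> * coth (u \<theta> * (T - t) / 2)"
definition "L \<theta> t = ln (sinh (u \<theta> * T / 2)) - ln (sinh (u \<theta> * (T - t) / 2))"
definition "Lc c \<theta> t = L \<theta> t + c * \<theta> * t / 2"

lemma a_pos: "a > 0" unfolding a_def using aS Lam by (simp add: mult.assoc)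

lemma u_eq: "u \<theta> = sqrt (\<theta>\<^sup>2 + a)"
  by (simp add: u_def theta_tilde_def a_def)

lemma u_pos: "u \<theta> > 0"
  using a_pos by (simp add: u_eq add_nonneg_pos)

lemma u_gt: assumes "0 \<le> \<theta>" shows "\<theta> < u \<theta>"
proof -
  have "sqrt (\<theta>\<^sup>2) < sqrt (\<theta>\<^sup>2 + a)" by (rule real_sqrt_less_mono) (use a_pos in simp)
  then show ?thesis using assms by (simp add: u_eq)
qed

lemma u_mono: assumes "0 \<le> \<theta>1" "\<theta>1 < \<theta>2" shows "u \<theta>1 < u \<theta>2"
proof -
  have "\<theta>1\<^sup>2 < \<theta>2\<^sup>2" using assms by (simp add: power_strict_mono)
  then show ?thesis by (simp add: u_eq)
qed

lemma C_eq: "Cfun T Lam Sig alpha \<theta> t = Lam * (K \<theta> t - \<theta>) / 2"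
  using aS by (simp add: Cfun_def K_def u_def[symmetric] algebra_simps mult.commute)

lemma K_inc:
  assumes "0 \<le> \<theta>1" "\<theta>1 < \<theta>2" "t < T"
  shows "K \<theta>1 t < K \<theta>2 t"
  using ucoth_strict_mono[OF u_pos u_mono[OF assms(1,2)], of "(T - t)/2"] assms(3)
  by (simp add: K_def mult.assoc)

lemma K_dec:
  assumes "0 \<le> \<theta>1" "\<theta>1 < \<theta>2" "t < T"
  shows "K \<theta>2 t - \<theta>2 < K \<theta>1 t - \<theta>1"
proof -
  define c where "c = (T - t) / 2"
  have c: "c > 0" using assms c_def by simp
  have rep: "K \<theta> t - \<theta> = (u \<theta> - \<theta>) + (2 * u \<theta> * c) / (exp (2 * u \<theta> * c) - 1) / c" for \<theta>
  proof -
    have v: "u \<theta> * c > 0" using u_pos c by simp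
    have e: "exp (2 * u \<theta> * c) > 1" by (metis one_less_exp_iff v mult.assoc mult_pos_pos zero_less_numeral)
    have "K \<theta> t = u \<theta> * coth (u \<theta> * c)" by (simp add: K_def c_def)
    also have "\<dots> = u \<theta> * (1 + 2 / (exp (2 * (u \<theta> * c)) - 1))" by (simp add: coth_exp[OF v])
    finally have k: "K \<theta> t = u \<theta> * (1 + 2 / (exp (2 * u \<theta> * c) - 1))" by (simp add: mult.assoc)
    have gen: "\<And>E. E > 1 \<Longrightarrow> u \<theta> * (1 + 2/(E-1)) - \<theta> = (u \<theta> - \<theta>) + (2*u \<theta>*c)/(E-1)/c"
      using c by (simp add: field_simps)
    show ?thesis unfolding k by (rule gen[OF e])
  qed
  have d1: "u \<theta> - \<theta> = a / (u \<theta> + \<theta>)" if "0 \<le> \<theta>" for \<theta>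
  proof -
    have "(u \<theta>)\<^sup>2 = \<theta>\<^sup>2 + a" using a_pos by (simp add: u_eq)
    moreover have "u \<theta> + \<theta> > 0" using u_pos that by (simp add: add_pos_nonneg)
    ultimately show ?thesis by (simp add: field_simps power2_eq_square)
  qed
  have s1: "u \<theta>2 - \<theta>2 < u \<theta>1 - \<theta>1"
  proof -
    have "u \<theta>1 + \<theta>1 < u \<theta>2 + \<theta>2" using u_mono[OF assms(1,2)] assms by simp
    moreover have "0 < u \<theta>1 + \<theta>1" using u_pos assms by (simp add: add_pos_nonneg)
    ultimately have "a / (u \<theta>2 + \<theta>2) < a / (u \<theta>1 + \<theta>1)"
      using a_pos by (simp add: divide_strict_left_mono mult_pos_pos)
    then show ?thesis using d1 assms by simp
  qed
  have s2: "(2 * u \<theta>2 * c) / (exp (2 * u \<theta>2 * c) - 1) \<le> (2 * u \<theta>1 * c) / (exp (2 * u \<theta>1 * c) - 1)"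
    by (rule q_mono) (use u_pos c u_mono[OF assms(1,2)] in auto)
  have s3: "(2 * u \<theta>2 * c) / (exp (2 * u \<theta>2 * c) - 1) / c \<le> (2 * u \<theta>1 * c) / (exp (2 * u \<theta>1 * c) - 1) / c"
    by (rule divide_right_mono[OF s2]) (use c in simp)
  show ?thesis using rep[of \<theta>1] rep[of \<theta>2] s1 s3 by linarith
qed

lemma K_pos:
  assumes "0 \<le> \<theta>" "t < T"
  shows "K \<theta> t - \<theta> > 0"
proof -
  have v: "u \<theta> * (T - t) / 2 > 0" using u_pos assms by simp
  have e: "exp (2 * (u \<theta> * (T - t) / 2)) > 1" using v by simp
  have "coth (u \<theta> * (T - t) / 2) > 1" using e by (simp add: coth_exp[OF v])
  then have "u \<theta> * 1 < K \<theta> t" unfolding K_def using u_pos by (intro mult_strict_left_mono) auto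
  then show ?thesis using u_gt[OF assms(1)] by simp
qed

end

context dp begin

lemma sinh_pos_arg: "t < T \<Longrightarrow> sinh (u \<theta> * (T - t) / 2) > 0"
  using u_pos[of \<theta>] by simp

lemma K_cont: assumes "s < T" shows "continuous_on {0..s} (\<lambda>r. (K \<theta> r + c * \<theta>) / 2)"
  unfolding K_def coth_def using u_pos[of \<theta>] assms by (intro continuous_intros) auto

lemma FTC: assumes "0 \<le> t" "t < T"
  shows "((\<lambda>s. (K \<theta> s + c * \<theta>) / 2) has_integral Lc c \<theta> t) {0..t}"
proof -
  define P where "P s = - ln (sinh (u \<theta> * (T - s) / 2)) + c * \<theta> * s / 2" for s
  have "((\<lambda>s. (K \<theta> s + c * \<theta>) / 2) has_integral P t - P 0) {0..t}"
  proof (rule fundamental_theorem_of_calculus[OF assms(1)])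
    fix x assume x: "x \<in> {0..t}"
    then have xT: "x < T" using assms by simp
    have sp: "sinh (u \<theta> * (T - x) / 2) > 0" using sinh_pos_arg[OF xT] .
    have "(P has_real_derivative (K \<theta> x + c * \<theta>) / 2) (at x)"
      unfolding P_def K_def coth_def using sp
      by (auto intro!: derivative_eq_intros simp: field_simps)
    then show "(P has_vector_derivative (K \<theta> x + c * \<theta>) / 2) (at x within {0..t})"
      by (simp add: has_real_derivative_iff_has_vector_derivative[symmetric] has_field_derivative_at_within)
  qed
  moreover have "P t - P 0 = Lc c \<theta> t" by (simp add: P_def Lc_def L_def)
  ultimately show ?thesis by simp
qed

lemma Lc_dec: assumes "0 < t" "t < T" "0 \<le> \<theta>1" "\<theta>1 < \<theta>2"
  shows "Lc (-1) \<theta>2 t < Lc (-1) \<theta>1 t"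
proof -
  have FT: "((\<lambda>s. (K \<theta> s - \<theta>) / 2) has_integral Lc (-1) \<theta> t) {0..t}" for \<theta>
    using FTC[of t \<theta> "-1"] assms by simp
  have KC: "continuous_on {0..t} (\<lambda>s. (K \<theta> s - \<theta>) / 2)" for \<theta>
    using K_cont[of t \<theta> "-1"] assms by simp
  have "integral {0..t} (\<lambda>s. (K \<theta>2 s - \<theta>2) / 2) < integral {0..t} (\<lambda>s. (K \<theta>1 s - \<theta>1) / 2)"
  proof (rule integral_less_real[OF KC KC])
    show "{0<..<t} \<noteq> {}" using assms by simp
    fix s assume "s \<in> {0<..<t}"
    then have "s < T" using assms by simp
    then show "(K \<theta>2 s - \<theta>2) / 2 < (K \<theta>1 s - \<theta>1) / 2" using K_dec[OF assms(3,4)] by fastforce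
  qed
  then show ?thesis using integral_unique[OF FT] by simp
qed

lemma Lc_inc: assumes "0 < t" "t < T" "0 \<le> \<theta>1" "\<theta>1 < \<theta>2" "c \<ge> 0"
  shows "Lc c \<theta>1 t < Lc c \<theta>2 t"
proof -
  have "integral {0..t} (\<lambda>s. (K \<theta>1 s + c * \<theta>1) / 2) < integral {0..t} (\<lambda>s. (K \<theta>2 s + c * \<theta>2) / 2)"
  proof (rule integral_less_real)
    show "continuous_on {0..t} (\<lambda>s. (K \<theta>2 s + c * \<theta>2) / 2)" by (rule K_cont) fact
    show "continuous_on {0..t} (\<lambda>s. (K \<theta>1 s + c * \<theta>1) / 2)" by (rule K_cont) fact
    show "{0<..<t} \<noteq> {}" using assms by simp
    fix s assume "s \<in> {0<..<t}"
    then have "s < T" using assms by simp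
    moreover have "c * \<theta>1 \<le> c * \<theta>2" using assms by (simp add: mult_left_mono)
    ultimately show "(K \<theta>1 s + c * \<theta>1) / 2 < (K \<theta>2 s + c * \<theta>2) / 2" using K_inc[OF assms(3,4)] by fastforce
  qed
  then show ?thesis using integral_unique[OF FTC] assms by simp
qed

lemma X_tilde_eq: assumes "0 \<le> t" "t < T"
  shows "X_tilde T Lam Sig alpha x \<theta> t = x * exp (- Lc (-1) \<theta> t)"
proof -
  have eq: "(\<lambda>s. Cfun T Lam Sig alpha \<theta> s / Lam) = (\<lambda>s. (K \<theta> s + (-1) * \<theta>) / 2)"
    using Lam by (simp add: C_eq)
  have "integral {0..t} (\<lambda>s. Cfun T Lam Sig alpha \<theta> s / Lam) = Lc (-1) \<theta> t"
    unfolding eq by (rule integral_unique[OF FTC[OF assms]])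
  then show ?thesis unfolding X_tilde_def by simp
qed

definition "Xc x \<theta> t = x * exp (\<theta> * t / 2) * sinh (u \<theta> * (T - t) / 2) / sinh (u \<theta> * T / 2)"
definition "Yc x \<theta> t = x * exp (\<theta> * t / 2) * (u \<theta> / 2 * cosh (u \<theta> * (T - t) / 2)
    - \<theta> / 2 * sinh (u \<theta> * (T - t) / 2)) / sinh (u \<theta> * T / 2)"

lemma Xc_cont: "continuous_on UNIV (\<lambda>t. (Xc x \<theta> t)\<^sup>2 * exp (- \<theta> * t))"
  unfolding Xc_def by (intro continuous_intros) (use u_pos[of \<theta>] T in auto)

lemma Yc_cont: "continuous_on UNIV (\<lambda>t. (Yc x \<theta> t)\<^sup>2 * exp (- \<theta> * t))"
  unfolding Yc_def by (intro continuous_intros) (use u_pos[of \<theta>] T in auto)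

lemma exp_Lc: assumes "0 \<le> t" "t < T"
  shows "x * exp (- Lc (-1) \<theta> t) = Xc x \<theta> t"
proof -
  have s0: "sinh (u \<theta> * T / 2) > 0" using u_pos[of \<theta>] T by simp
  have st: "sinh (u \<theta> * (T - t) / 2) > 0" using sinh_pos_arg assms by simp
  have "- Lc (-1) \<theta> t = \<theta> * t / 2 + (ln (sinh (u \<theta> * (T - t) / 2)) - ln (sinh (u \<theta> * T / 2)))"
    by (simp add: Lc_def L_def)
  then have "exp (- Lc (-1) \<theta> t) = exp (\<theta> * t / 2) * (sinh (u \<theta> * (T - t) / 2) / sinh (u \<theta> * T / 2))"
    using s0 st by (simp add: exp_add exp_diff)
  then show ?thesis by (simp add: Xc_def)
qed

lemma X_tilde_Xc: assumes "0 \<le> t" "t < T"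
  shows "X_tilde T Lam Sig alpha x \<theta> t = Xc x \<theta> t"
  using X_tilde_eq[OF assms] exp_Lc[OF assms] by simp

lemma xi_Yc: assumes "0 \<le> t" "t < T"
  shows "xi_star T Lam Sig alpha \<theta> t (X_tilde T Lam Sig alpha x \<theta> t) = Yc x \<theta> t"
proof -
  have st: "sinh (u \<theta> * (T - t) / 2) > 0" using sinh_pos_arg assms by simp
  show ?thesis
    unfolding X_tilde_Xc[OF assms] xi_star_def C_eq Xc_def Yc_def K_def coth_def
    using st Lam u_pos[of \<theta>] assms by (simp add: field_simps)
qed

end

context dp begin

lemma EP: assumes fj: "first_jump_time M \<tau> \<theta>" and t: "0 \<le> t" "t < T"
  shows "expected_position T Lam Sig alpha x \<theta> M \<tau> t = x * exp (- Lc 1 \<theta> t)"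
proof -
  interpret prob_space M using fj first_jump_time_def by auto
  have \<tau>m[measurable]: "\<tau> \<in> borel_measurable M" using fj first_jump_time_def by auto
  have meas: "measure M {\<omega> \<in> space M. ereal t < \<tau> \<omega>} = exp (- \<theta> * t)"
    using fj first_jump_time_def t by auto
  have "expected_position T Lam Sig alpha x \<theta> M \<tau> t
      = (\<integral>\<omega>. X_tilde T Lam Sig alpha x \<theta> t * indicator {\<omega> \<in> space M. ereal t < \<tau> \<omega>} \<omega> \<partial>M)"
    unfolding expected_position_def
    by (rule Bochner_Integration.integral_cong[OF refl]) (auto simp: X_star_def indicator_def)
  also have "\<dots> = X_tilde T Lam Sig alpha x \<theta> t * exp (- \<theta> * t)" using meas by simp
  also have "\<dots> = x * (exp (- Lc (-1) \<theta> t) * exp (- \<theta> * t))" using X_tilde_eq[OF t] by simp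
  also have "exp (- Lc (-1) \<theta> t) * exp (- \<theta> * t) = exp (- Lc 1 \<theta> t)"
    by (simp add: exp_add[symmetric] Lc_def algebra_simps)
  finally show ?thesis .
qed

lemma Xc2_cont: "continuous_on UNIV (\<lambda>t. (Xc x \<theta> t)\<^sup>2)"
  unfolding Xc_def by (intro continuous_intros) (use u_pos[of \<theta>] T in auto)

lemma Yc2_cont: "continuous_on UNIV (\<lambda>t. (Yc x \<theta> t)\<^sup>2)"
  unfolding Yc_def by (intro continuous_intros) (use u_pos[of \<theta>] T in auto)

lemma RC: assumes fj: "first_jump_time M \<tau> \<theta>"
  shows "risk_costs T Lam Sig alpha x \<theta> M \<tau> = alpha * Sig * integral {0..T} (\<lambda>t. (Xc x \<theta> t)\<^sup>2 * exp (- \<theta> * t))"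
proof -
  have "\<And>\<omega>. (LBINT t:{0..<T}. (X_star T Lam Sig alpha x \<theta> (\<tau> \<omega>) t)\<^sup>2)
      = (LBINT t:{0..<T}. (if ereal t < \<tau> \<omega> then (Xc x \<theta> t)\<^sup>2 else 0))"
    by (rule set_lebesgue_integral_cong) (auto simp: X_star_def X_tilde_Xc)
  then have "risk_costs T Lam Sig alpha x \<theta> M \<tau>
     = alpha * Sig * (\<integral>\<omega>. (LBINT t:{0..<T}. (if ereal t < \<tau> \<omega> then (Xc x \<theta> t)\<^sup>2 else 0)) \<partial>M)"
    unfolding risk_costs_def by simp
  also have "\<dots> = alpha * Sig * (LBINT t:{0..<T}. (Xc x \<theta> t)\<^sup>2 * exp (- \<theta> * t))"
    using swap[OF fj Xc2_cont T] by simp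
  also have "\<dots> = alpha * Sig * integral {0..T} (\<lambda>t. (Xc x \<theta> t)\<^sup>2 * exp (- \<theta> * t))"
    using LI[OF continuous_on_subset[OF Xc_cont subset_UNIV]] T by simp
  finally show ?thesis .
qed

lemma IC: assumes fj: "first_jump_time M \<tau> \<theta>"
  shows "impact_costs T Lam Sig alpha x \<theta> M \<tau> = Lam * integral {0..T} (\<lambda>t. (Yc x \<theta> t)\<^sup>2 * exp (- \<theta> * t))"
proof -
  have "\<And>\<omega>. (LBINT t:{0..<T}. (xi_star T Lam Sig alpha \<theta> t (X_star T Lam Sig alpha x \<theta> (\<tau> \<omega>) t))\<^sup>2)
      = (LBINT t:{0..<T}. (if ereal t < \<tau> \<omega> then (Yc x \<theta> t)\<^sup>2 else 0))"
    by (rule set_lebesgue_integral_cong) (auto simp: X_star_def xi_Yc, simp add: xi_star_def)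
  then have "impact_costs T Lam Sig alpha x \<theta> M \<tau>
     = Lam * (\<integral>\<omega>. (LBINT t:{0..<T}. (if ereal t < \<tau> \<omega> then (Yc x \<theta> t)\<^sup>2 else 0)) \<partial>M)"
    unfolding impact_costs_def by simp
  also have "\<dots> = Lam * (LBINT t:{0..<T}. (Yc x \<theta> t)\<^sup>2 * exp (- \<theta> * t))"
    using swap[OF fj Yc2_cont T] by simp
  also have "\<dots> = Lam * integral {0..T} (\<lambda>t. (Yc x \<theta> t)\<^sup>2 * exp (- \<theta> * t))"
    using LI[OF continuous_on_subset[OF Yc_cont subset_UNIV]] T by simp
  finally show ?thesis .
qed

lemma pw_risk: assumes "0 \<le> t" "t < T"
  shows "(Xc x \<theta> t)\<^sup>2 * exp (- \<theta> * t) = x\<^sup>2 * exp (- 2 * Lc 0 \<theta> t)"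
proof -
  have "(Xc x \<theta> t)\<^sup>2 * exp (- \<theta> * t) = x\<^sup>2 * (exp (- Lc (-1) \<theta> t) * exp (- Lc (-1) \<theta> t) * exp (- \<theta> * t))"
    using exp_Lc[OF assms, of x \<theta>, symmetric] by (simp add: power2_eq_square)
  also have "exp (- Lc (-1) \<theta> t) * exp (- Lc (-1) \<theta> t) * exp (- \<theta> * t) = exp (- 2 * Lc 0 \<theta> t)"
    by (simp add: exp_add[symmetric] Lc_def algebra_simps)
  finally show ?thesis .
qed

lemma Yc_eq: assumes "0 \<le> t" "t < T"
  shows "Yc x \<theta> t = (K \<theta> t - \<theta>) / 2 * Xc x \<theta> t"
  using xi_Yc[OF assms, of \<theta> x, symmetric] X_tilde_Xc[OF assms] Lam
  by (simp add: xi_star_def C_eq)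

lemma pw_impact: assumes "0 \<le> t" "t < T"
  shows "(Yc x \<theta> t)\<^sup>2 * exp (- \<theta> * t) = ((K \<theta> t - \<theta>) / 2)\<^sup>2 * (x\<^sup>2 * exp (- 2 * Lc 0 \<theta> t))"
proof -
  have "(Yc x \<theta> t)\<^sup>2 * exp (- \<theta> * t) = ((K \<theta> t - \<theta>) / 2)\<^sup>2 * ((Xc x \<theta> t)\<^sup>2 * exp (- \<theta> * t))"
    unfolding Yc_eq[OF assms, of x \<theta>] by (simp only: power_mult_distrib mult.assoc)
  then show ?thesis using pw_risk[OF assms, of x \<theta>] by simp
qed

end
theorem proposition4p1:
  fixes T Lam Sig alpha :: real
  assumes T: "T > 0" and Lam: "Lam > 0" and Sig: "Sig \<ge> 0" and alpha: "alpha \<ge> 0"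
    and aS: "alpha * Sig > 0"
  shows
    "(\<forall>t \<in> {0..<T}. \<forall>\<theta>1 \<theta>2. 0 \<le> \<theta>1 \<and> \<theta>1 < \<theta>2 \<longrightarrow>
        Cfun T Lam Sig alpha \<theta>2 t < Cfun T Lam Sig alpha \<theta>1 t)
   \<and> (\<forall>x > 0. \<forall>t \<in> {0..<T}. \<forall>\<theta>1 \<theta>2. 0 \<le> \<theta>1 \<and> \<theta>1 < \<theta>2 \<longrightarrow>
        xi_star T Lam Sig alpha \<theta>2 t x < xi_star T Lam Sig alpha \<theta>1 t x)
   \<and> (\<forall>x > 0. \<forall>t \<in> {0<..<T}. \<forall>\<theta>1 \<theta>2. 0 \<le> \<theta>1 \<and> \<theta>1 < \<theta>2 \<longrightarrow>
        X_tilde T Lam Sig alpha x \<theta>1 t < X_tilde T Lam Sig alpha x \<theta>2 t)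
   \<and> (\<forall>x > 0. \<forall>t \<in> {0<..<T}. \<forall>\<theta>1 \<theta>2 (M1 :: 'a measure) \<tau>1 (M2 :: 'b measure) \<tau>2.
        0 \<le> \<theta>1 \<and> \<theta>1 < \<theta>2 \<and> first_jump_time M1 \<tau>1 \<theta>1 \<and> first_jump_time M2 \<tau>2 \<theta>2 \<longrightarrow>
        expected_position T Lam Sig alpha x \<theta>2 M2 \<tau>2 t
          < expected_position T Lam Sig alpha x \<theta>1 M1 \<tau>1 t)
   \<and> (\<forall>x > 0. \<forall>\<theta>1 \<theta>2 (M1 :: 'a measure) \<tau>1 (M2 :: 'b measure) \<tau>2.
        0 \<le> \<theta>1 \<and> \<theta>1 < \<theta>2 \<and> first_jump_time M1 \<tau>1 \<theta>1 \<and> first_jump_time M2 \<tau>2 \<theta>2 \<longrightarrow>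
        risk_costs T Lam Sig alpha x \<theta>2 M2 \<tau>2 < risk_costs T Lam Sig alpha x \<theta>1 M1 \<tau>1)
   \<and> (\<forall>x > 0. \<forall>\<theta>1 \<theta>2 (M1 :: 'a measure) \<tau>1 (M2 :: 'b measure) \<tau>2.
        0 \<le> \<theta>1 \<and> \<theta>1 < \<theta>2 \<and> first_jump_time M1 \<tau>1 \<theta>1 \<and> first_jump_time M2 \<tau>2 \<theta>2 \<longrightarrow>
        impact_costs T Lam Sig alpha x \<theta>2 M2 \<tau>2 < impact_costs T Lam Sig alpha x \<theta>1 M1 \<tau>1)"
proof -
  interpret dp T Lam Sig alpha using T Lam aS by unfold_locales
  have P1: "\<And>t \<theta>1 \<theta>2. t \<in> {0..<T} \<Longrightarrow> 0 \<le> \<theta>1 \<Longrightarrow> \<theta>1 < \<theta>2 \<Longrightarrow>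
        Cfun T Lam Sig alpha \<theta>2 t < Cfun T Lam Sig alpha \<theta>1 t"
  proof -
    fix t \<theta>1 \<theta>2 :: real assume h: "t \<in> {0..<T}" "0 \<le> \<theta>1" "\<theta>1 < \<theta>2"
    have "K \<theta>2 t - \<theta>2 < K \<theta>1 t - \<theta>1" using K_dec[OF h(2,3)] h(1) by simp
    then show "Cfun T Lam Sig alpha \<theta>2 t < Cfun T Lam Sig alpha \<theta>1 t"
      unfolding C_eq using Lam by simp
  qed
  have P2: "\<And>x t \<theta>1 \<theta>2. x > 0 \<Longrightarrow> t \<in> {0..<T} \<Longrightarrow> 0 \<le> \<theta>1 \<Longrightarrow> \<theta>1 < \<theta>2 \<Longrightarrow>
        xi_star T Lam Sig alpha \<theta>2 t x < xi_star T Lam Sig alpha \<theta>1 t x"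
    unfolding xi_star_def using P1 Lam by (simp add: divide_strict_right_mono)
  have P3: "\<And>x t \<theta>1 \<theta>2. x > 0 \<Longrightarrow> t \<in> {0<..<T} \<Longrightarrow> 0 \<le> \<theta>1 \<Longrightarrow> \<theta>1 < \<theta>2 \<Longrightarrow>
        X_tilde T Lam Sig alpha x \<theta>1 t < X_tilde T Lam Sig alpha x \<theta>2 t"
  proof -
    fix x t \<theta>1 \<theta>2 :: real assume h: "x > 0" "t \<in> {0<..<T}" "0 \<le> \<theta>1" "\<theta>1 < \<theta>2"
    have "Lc (-1) \<theta>2 t < Lc (-1) \<theta>1 t" using Lc_dec[OF _ _ h(3,4)] h(2) by simp
    then show "X_tilde T Lam Sig alpha x \<theta>1 t < X_tilde T Lam Sig alpha x \<theta>2 t"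
      using X_tilde_eq[of t] h by simp
  qed
  have P4: "\<And>x t \<theta>1 \<theta>2 (M1 :: 'a measure) \<tau>1 (M2 :: 'b measure) \<tau>2. x > 0 \<Longrightarrow> t \<in> {0<..<T} \<Longrightarrow>
        0 \<le> \<theta>1 \<and> \<theta>1 < \<theta>2 \<and> first_jump_time M1 \<tau>1 \<theta>1 \<and> first_jump_time M2 \<tau>2 \<theta>2 \<Longrightarrow>
        expected_position T Lam Sig alpha x \<theta>2 M2 \<tau>2 t < expected_position T Lam Sig alpha x \<theta>1 M1 \<tau>1 t"
  proof -
    fix x t \<theta>1 \<theta>2 :: real and M1 :: "'a measure" and \<tau>1 and M2 :: "'b measure" and \<tau>2
    assume h: "x > 0" "t \<in> {0<..<T}"
      "0 \<le> \<theta>1 \<and> \<theta>1 < \<theta>2 \<and> first_jump_time M1 \<tau>1 \<theta>1 \<and> first_jump_time M2 \<tau>2 \<theta>2"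
    have "Lc 1 \<theta>1 t < Lc 1 \<theta>2 t" using Lc_inc[of t \<theta>1 \<theta>2 1] h by simp
    then show "expected_position T Lam Sig alpha x \<theta>2 M2 \<tau>2 t < expected_position T Lam Sig alpha x \<theta>1 M1 \<tau>1 t"
      using EP[of M1 \<tau>1 \<theta>1 t x] EP[of M2 \<tau>2 \<theta>2 t x] h by simp
  qed
  have P5: "\<And>x \<theta>1 \<theta>2 (M1 :: 'a measure) \<tau>1 (M2 :: 'b measure) \<tau>2. x > 0 \<Longrightarrow>
        0 \<le> \<theta>1 \<and> \<theta>1 < \<theta>2 \<and> first_jump_time M1 \<tau>1 \<theta>1 \<and> first_jump_time M2 \<tau>2 \<theta>2 \<Longrightarrow>
        risk_costs T Lam Sig alpha x \<theta>2 M2 \<tau>2 < risk_costs T Lam Sig alpha x \<theta>1 M1 \<tau>1"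
  proof -
    fix x \<theta>1 \<theta>2 :: real and M1 :: "'a measure" and \<tau>1 and M2 :: "'b measure" and \<tau>2
    assume h: "x > 0"
      "0 \<le> \<theta>1 \<and> \<theta>1 < \<theta>2 \<and> first_jump_time M1 \<tau>1 \<theta>1 \<and> first_jump_time M2 \<tau>2 \<theta>2"
    have "integral {0..T} (\<lambda>t. (Xc x \<theta>2 t)\<^sup>2 * exp (- \<theta>2 * t)) < integral {0..T} (\<lambda>t. (Xc x \<theta>1 t)\<^sup>2 * exp (- \<theta>1 * t))"
    proof (rule integral_less_real)
      show "continuous_on {0..T} (\<lambda>t. (Xc x \<theta>2 t)\<^sup>2 * exp (- \<theta>2 * t))"
        by (rule continuous_on_subset[OF Xc_cont subset_UNIV])
      show "continuous_on {0..T} (\<lambda>t. (Xc x \<theta>1 t)\<^sup>2 * exp (- \<theta>1 * t))"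
        by (rule continuous_on_subset[OF Xc_cont subset_UNIV])
      show "{0<..<T} \<noteq> {}" using T by simp
      fix t assume t: "t \<in> {0<..<T}"
      have "Lc 0 \<theta>1 t < Lc 0 \<theta>2 t" using Lc_inc[of t \<theta>1 \<theta>2 0] h t by simp
      then have "x\<^sup>2 * exp (- 2 * Lc 0 \<theta>2 t) < x\<^sup>2 * exp (- 2 * Lc 0 \<theta>1 t)" using h by simp
      then show "(Xc x \<theta>2 t)\<^sup>2 * exp (- \<theta>2 * t) < (Xc x \<theta>1 t)\<^sup>2 * exp (- \<theta>1 * t)"
        using pw_risk[of t x \<theta>1] pw_risk[of t x \<theta>2] t by simp
    qed
    then have "(alpha * Sig) * integral {0..T} (\<lambda>t. (Xc x \<theta>2 t)\<^sup>2 * exp (- \<theta>2 * t)) < (alpha * Sig) * integral {0..T} (\<lambda>t. (Xc x \<theta>1 t)\<^sup>2 * exp (- \<theta>1 * t))"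
      by (rule mult_strict_left_mono[OF _ aS])
    then show "risk_costs T Lam Sig alpha x \<theta>2 M2 \<tau>2 < risk_costs T Lam Sig alpha x \<theta>1 M1 \<tau>1"
      using RC[of M1 \<tau>1 \<theta>1 x] RC[of M2 \<tau>2 \<theta>2 x] h by simp
  qed
  have P6: "\<And>x \<theta>1 \<theta>2 (M1 :: 'a measure) \<tau>1 (M2 :: 'b measure) \<tau>2. x > 0 \<Longrightarrow>
        0 \<le> \<theta>1 \<and> \<theta>1 < \<theta>2 \<and> first_jump_time M1 \<tau>1 \<theta>1 \<and> first_jump_time M2 \<tau>2 \<theta>2 \<Longrightarrow>
        impact_costs T Lam Sig alpha x \<theta>2 M2 \<tau>2 < impact_costs T Lam Sig alpha x \<theta>1 M1 \<tau>1"
  proof -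
    fix x \<theta>1 \<theta>2 :: real and M1 :: "'a measure" and \<tau>1 and M2 :: "'b measure" and \<tau>2
    assume h: "x > 0"
      "0 \<le> \<theta>1 \<and> \<theta>1 < \<theta>2 \<and> first_jump_time M1 \<tau>1 \<theta>1 \<and> first_jump_time M2 \<tau>2 \<theta>2"
    have "integral {0..T} (\<lambda>t. (Yc x \<theta>2 t)\<^sup>2 * exp (- \<theta>2 * t)) < integral {0..T} (\<lambda>t. (Yc x \<theta>1 t)\<^sup>2 * exp (- \<theta>1 * t))"
    proof (rule integral_less_real)
      show "continuous_on {0..T} (\<lambda>t. (Yc x \<theta>2 t)\<^sup>2 * exp (- \<theta>2 * t))"
        by (rule continuous_on_subset[OF Yc_cont subset_UNIV])
      show "continuous_on {0..T} (\<lambda>t. (Yc x \<theta>1 t)\<^sup>2 * exp (- \<theta>1 * t))"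
        by (rule continuous_on_subset[OF Yc_cont subset_UNIV])
      show "{0<..<T} \<noteq> {}" using T by simp
      fix t assume t: "t \<in> {0<..<T}"
      have "Lc 0 \<theta>1 t < Lc 0 \<theta>2 t" using Lc_inc[of t \<theta>1 \<theta>2 0] h t by simp
      then have q: "x\<^sup>2 * exp (- 2 * Lc 0 \<theta>2 t) < x\<^sup>2 * exp (- 2 * Lc 0 \<theta>1 t)" using h by simp
      have q0: "0 < x\<^sup>2 * exp (- 2 * Lc 0 \<theta>2 t)" using h by simp
      have k: "K \<theta>2 t - \<theta>2 < K \<theta>1 t - \<theta>1" using K_dec[of \<theta>1 \<theta>2 t] h t by simp
      have k0: "0 < K \<theta>2 t - \<theta>2" using K_pos[of \<theta>2 t] h t by simp
      have kk: "((K \<theta>2 t - \<theta>2) / 2)\<^sup>2 < ((K \<theta>1 t - \<theta>1) / 2)\<^sup>2"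
        using k k0 by (intro power_strict_mono) auto
      have "((K \<theta>2 t - \<theta>2) / 2)\<^sup>2 * (x\<^sup>2 * exp (- 2 * Lc 0 \<theta>2 t))
          < ((K \<theta>1 t - \<theta>1) / 2)\<^sup>2 * (x\<^sup>2 * exp (- 2 * Lc 0 \<theta>1 t))"
      proof (rule mult_strict_mono[OF kk q])
        show "0 < ((K \<theta>1 t - \<theta>1) / 2)\<^sup>2" using kk zero_le_power2[of "(K \<theta>2 t - \<theta>2) / 2"] by linarith
        show "0 \<le> x\<^sup>2 * exp (- 2 * Lc 0 \<theta>2 t)" using q0 by linarith
      qed
      then show "(Yc x \<theta>2 t)\<^sup>2 * exp (- \<theta>2 * t) < (Yc x \<theta>1 t)\<^sup>2 * exp (- \<theta>1 * t)"
        using pw_impact[of t x \<theta>1] pw_impact[of t x \<theta>2] t by simp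
    qed
    then show "impact_costs T Lam Sig alpha x \<theta>2 M2 \<tau>2 < impact_costs T Lam Sig alpha x \<theta>1 M1 \<tau>1"
      using IC[of M1 \<tau>1 \<theta>1 x] IC[of M2 \<tau>2 \<theta>2 x] h Lam by simp
  qed
  show ?thesis
    apply (intro conjI)
    subgoal using P1 by blast
    subgoal using P2 by blast
    subgoal using P3 by blast
    subgoal by (intro allI impI ballI, rule P4) auto
    subgoal by (intro allI impI, rule P5) auto
    subgoal by (intro allI impI, rule P6) auto
    done
qed

end
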